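(* Let $R$ be a ring, $P$ a discrete projective left $R$-module and $Q$ a discrete projective right $R$-module, and let $Q^*=\operatorname{Hom}_R(Q,R)$ carry the topology of pointwise convergence. Then every continuous $R$-linear map $Q^*\to P$ has finitely generated image.
   Context: The topology of pointwise convergence on $Q^*$ has as a base of neighborhoods of $0$ the annihilators of finitely generated submodules of $Q$; $P$ is discrete. *)

theory Defs
  imports "HOL-Algebra.Module" "HOL-Analysis.Function_Topology"
begin

text \<open>A left or right module is
  represented by a record of type module whose smult field is the scalar action;
  for a right module, smult a x stands for x a.\<close>

definition left_module :: "('r, 'c) ring_scheme \<Rightarrow> ('r, 'm) module \<Rightarrow> bool" where
  "left_module R M \<longleftrightarrow> ring R \<and> abelian_group M \<and>
    (\<forall>a\<in>carrier R. \<forall>x\<in>carrier M. smult M a x \<in> carrier M) \<and>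
    (\<forall>a\<in>carrier R. \<forall>b\<in>carrier R. \<forall>x\<in>carrier M.
        smult M (a \<oplus>\<^bsub>R\<^esub> b) x = smult M a x \<oplus>\<^bsub>M\<^esub> smult M b x) \<and>
    (\<forall>a\<in>carrier R. \<forall>x\<in>carrier M. \<forall>y\<in>carrier M.
        smult M a (x \<oplus>\<^bsub>M\<^esub> y) = smult M a x \<oplus>\<^bsub>M\<^esub> smult M a y) \<and>
    (\<forall>a\<in>carrier R. \<forall>b\<in>carrier R. \<forall>x\<in>carrier M.
        smult M (a \<otimes>\<^bsub>R\<^esub> b) x = smult M a (smult M b x)) \<and>
    (\<forall>x\<in>carrier M. smult M \<one>\<^bsub>R\<^esub> x = x)"

text \<open>Right module: smult M a x denotes x a, so x (a b) = (x a) b.\<close>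
definition right_module :: "('r, 'c) ring_scheme \<Rightarrow> ('r, 'm) module \<Rightarrow> bool" where
  "right_module R M \<longleftrightarrow> ring R \<and> abelian_group M \<and>
    (\<forall>a\<in>carrier R. \<forall>x\<in>carrier M. smult M a x \<in> carrier M) \<and>
    (\<forall>a\<in>carrier R. \<forall>b\<in>carrier R. \<forall>x\<in>carrier M.
        smult M (a \<oplus>\<^bsub>R\<^esub> b) x = smult M a x \<oplus>\<^bsub>M\<^esub> smult M b x) \<and>
    (\<forall>a\<in>carrier R. \<forall>x\<in>carrier M. \<forall>y\<in>carrier M.
        smult M a (x \<oplus>\<^bsub>M\<^esub> y) = smult M a x \<oplus>\<^bsub>M\<^esub> smult M a y) \<and>
    (\<forall>a\<in>carrier R. \<forall>b\<in>carrier R. \<forall>x\<in>carrier M.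
        smult M (a \<otimes>\<^bsub>R\<^esub> b) x = smult M b (smult M a x)) \<and>
    (\<forall>x\<in>carrier M. smult M \<one>\<^bsub>R\<^esub> x = x)"

definition lin_map :: "('r, 'c) ring_scheme \<Rightarrow> ('r, 'm) module \<Rightarrow> ('r, 'n) module \<Rightarrow> ('m \<Rightarrow> 'n) \<Rightarrow> bool" where
  "lin_map R M N f \<longleftrightarrow> f \<in> carrier M \<rightarrow> carrier N \<and>
    (\<forall>x\<in>carrier M. \<forall>y\<in>carrier M. f (x \<oplus>\<^bsub>M\<^esub> y) = f x \<oplus>\<^bsub>N\<^esub> f y) \<and>
    (\<forall>a\<in>carrier R. \<forall>x\<in>carrier M. f (smult M a x) = smult N a (f x))"

definition free_left_module :: "('r, 'c) ring_scheme \<Rightarrow> 'i set \<Rightarrow> ('r, 'i \<Rightarrow> 'r) module" where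
  "free_left_module R I =
    \<lparr> carrier = {\<phi>. \<phi> \<in> I \<rightarrow>\<^sub>E carrier R \<and> finite {i\<in>I. \<phi> i \<noteq> \<zero>\<^bsub>R\<^esub>}},
      mult = (\<lambda>_ _. undefined), one = undefined,
      zero = (\<lambda>i\<in>I. \<zero>\<^bsub>R\<^esub>),
      add = (\<lambda>\<phi> \<psi>. \<lambda>i\<in>I. \<phi> i \<oplus>\<^bsub>R\<^esub> \<psi> i),
      smult = (\<lambda>a \<phi>. \<lambda>i\<in>I. a \<otimes>\<^bsub>R\<^esub> \<phi> i) \<rparr>"

definition free_right_module :: "('r, 'c) ring_scheme \<Rightarrow> 'i set \<Rightarrow> ('r, 'i \<Rightarrow> 'r) module" where
  "free_right_module R I =
    \<lparr> carrier = {\<phi>. \<phi> \<in> I \<rightarrow>\<^sub>E carrier R \<and> finite {i\<in>I. \<phi> i \<noteq> \<zero>\<^bsub>R\<^esub>}},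
      mult = (\<lambda>_ _. undefined), one = undefined,
      zero = (\<lambda>i\<in>I. \<zero>\<^bsub>R\<^esub>),
      add = (\<lambda>\<phi> \<psi>. \<lambda>i\<in>I. \<phi> i \<oplus>\<^bsub>R\<^esub> \<psi> i),
      smult = (\<lambda>a \<phi>. \<lambda>i\<in>I. \<phi> i \<otimes>\<^bsub>R\<^esub> a) \<rparr>"

text \<open>Projective = direct summand of a free module. The basis may be indexed by a
  subset of the element type of the module (R^(M) always suffices).\<close>
definition projective_left :: "('r, 'c) ring_scheme \<Rightarrow> ('r, 'm) module \<Rightarrow> bool" where
  "projective_left R M \<longleftrightarrow> left_module R M \<and>
    (\<exists>(I::'m set) i p. lin_map R M (free_left_module R I) i \<and>
        lin_map R (free_left_module R I) M p \<and> (\<forall>x\<in>carrier M. p (i x) = x))"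

definition projective_right :: "('r, 'c) ring_scheme \<Rightarrow> ('r, 'm) module \<Rightarrow> bool" where
  "projective_right R M \<longleftrightarrow> right_module R M \<and>
    (\<exists>(I::'m set) i p. lin_map R M (free_right_module R I) i \<and>
        lin_map R (free_right_module R I) M p \<and> (\<forall>x\<in>carrier M. p (i x) = x))"

definition dual_module :: "('r, 'c) ring_scheme \<Rightarrow> ('r, 'q) module \<Rightarrow> ('r, 'q \<Rightarrow> 'r) module" where
  "dual_module R Q =
    \<lparr> carrier = {f. f \<in> carrier Q \<rightarrow>\<^sub>E carrier R \<and>
                   (\<forall>x\<in>carrier Q. \<forall>y\<in>carrier Q. f (x \<oplus>\<^bsub>Q\<^esub> y) = f x \<oplus>\<^bsub>R\<^esub> f y) \<and>
                   (\<forall>a\<in>carrier R. \<forall>x\<in>carrier Q. f (smult Q a x) = f x \<otimes>\<^bsub>R\<^esub> a)},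
      mult = (\<lambda>_ _. undefined), one = undefined,
      zero = (\<lambda>x\<in>carrier Q. \<zero>\<^bsub>R\<^esub>),
      add = (\<lambda>f g. \<lambda>x\<in>carrier Q. f x \<oplus>\<^bsub>R\<^esub> g x),
      smult = (\<lambda>a f. \<lambda>x\<in>carrier Q. a \<otimes>\<^bsub>R\<^esub> f x) \<rparr>"

definition pointwise_topology :: "('r, 'c) ring_scheme \<Rightarrow> ('r, 'q) module \<Rightarrow> ('q \<Rightarrow> 'r) topology" where
  "pointwise_topology R Q =
     subtopology (product_topology (\<lambda>_. discrete_topology (carrier R)) (carrier Q))
                 (carrier (dual_module R Q))"

definition lspan :: "('r, 'c) ring_scheme \<Rightarrow> ('r, 'm) module \<Rightarrow> 'm set \<Rightarrow> 'm set" where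
  "lspan R M S = {finsum M (\<lambda>s. smult M (c s) s) S | c. c \<in> S \<rightarrow> carrier R}"

definition finitely_generated_image :: "('r, 'c) ring_scheme \<Rightarrow> ('r, 'm) module \<Rightarrow> 'm set \<Rightarrow> bool" where
  "finitely_generated_image R M A \<longleftrightarrow> (\<exists>S. finite S \<and> S \<subseteq> carrier M \<and> A = lspan R M S)"

end

theory Submission
  imports Defs
begin

lemma lm_basic:
  assumes "left_module R M"
  shows "ring R" "abelian_group M"
    "\<And>a x. a \<in> carrier R \<Longrightarrow> x \<in> carrier M \<Longrightarrow> smult M a x \<in> carrier M"
    "\<And>a b x. a \<in> carrier R \<Longrightarrow> b \<in> carrier R \<Longrightarrow> x \<in> carrier M \<Longrightarrow>
        smult M (a \<oplus>\<^bsub>R\<^esub> b) x = smult M a x \<oplus>\<^bsub>M\<^esub> smult M b x"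
    "\<And>a x y. a \<in> carrier R \<Longrightarrow> x \<in> carrier M \<Longrightarrow> y \<in> carrier M \<Longrightarrow>
        smult M a (x \<oplus>\<^bsub>M\<^esub> y) = smult M a x \<oplus>\<^bsub>M\<^esub> smult M a y"
    "\<And>a b x. a \<in> carrier R \<Longrightarrow> b \<in> carrier R \<Longrightarrow> x \<in> carrier M \<Longrightarrow>
        smult M (a \<otimes>\<^bsub>R\<^esub> b) x = smult M a (smult M b x)"
    "\<And>x. x \<in> carrier M \<Longrightarrow> smult M \<one>\<^bsub>R\<^esub> x = x"
  using assms unfolding left_module_def by auto

lemma lm_zero_smult:
  assumes "left_module R M" "x \<in> carrier M"
  shows "smult M \<zero>\<^bsub>R\<^esub> x = \<zero>\<^bsub>M\<^esub>"
proof -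
  interpret R: ring R using lm_basic[OF assms(1)] by simp
  interpret M: abelian_group M using lm_basic[OF assms(1)] by simp
  have c: "smult M \<zero>\<^bsub>R\<^esub> x \<in> carrier M" using lm_basic(3)[OF assms(1)] assms by simp
  have "smult M \<zero>\<^bsub>R\<^esub> x = smult M (\<zero>\<^bsub>R\<^esub> \<oplus>\<^bsub>R\<^esub> \<zero>\<^bsub>R\<^esub>) x" by simp
  also have "\<dots> = smult M \<zero>\<^bsub>R\<^esub> x \<oplus>\<^bsub>M\<^esub> smult M \<zero>\<^bsub>R\<^esub> x"
    using lm_basic(4)[OF assms(1) R.zero_closed R.zero_closed assms(2)] by simp
  finally have e: "smult M \<zero>\<^bsub>R\<^esub> x = smult M \<zero>\<^bsub>R\<^esub> x \<oplus>\<^bsub>M\<^esub> smult M \<zero>\<^bsub>R\<^esub> x" .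
  show ?thesis using M.add.l_cancel_one'[OF c c] e by blast
qed

lemma lm_neg_smult:
  assumes "left_module R M" "x \<in> carrier M"
  shows "smult M (\<ominus>\<^bsub>R\<^esub> \<one>\<^bsub>R\<^esub>) x = \<ominus>\<^bsub>M\<^esub> x"
proof -
  interpret R: ring R using lm_basic[OF assms(1)] by simp
  interpret M: abelian_group M using lm_basic[OF assms(1)] by simp
  have c: "smult M (\<ominus>\<^bsub>R\<^esub> \<one>\<^bsub>R\<^esub>) x \<in> carrier M" using lm_basic(3)[OF assms(1)] assms by simp
  have "x \<oplus>\<^bsub>M\<^esub> smult M (\<ominus>\<^bsub>R\<^esub> \<one>\<^bsub>R\<^esub>) x = smult M (\<one>\<^bsub>R\<^esub> \<oplus>\<^bsub>R\<^esub> \<ominus>\<^bsub>R\<^esub> \<one>\<^bsub>R\<^esub>) x"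
    using lm_basic(4)[OF assms(1) R.one_closed R.a_inv_closed[OF R.one_closed] assms(2)] lm_basic(7)[OF assms] by simp
  also have "\<dots> = \<zero>\<^bsub>M\<^esub>" using lm_zero_smult[OF assms] by (simp add: R.r_neg)
  finally have "smult M (\<ominus>\<^bsub>R\<^esub> \<one>\<^bsub>R\<^esub>) x \<oplus>\<^bsub>M\<^esub> x = \<zero>\<^bsub>M\<^esub>" using c assms(2) M.a_comm by simp
  from M.minus_equality[OF this assms(2) c] show ?thesis by (rule sym)
qed

lemma lspan_zero:
  assumes "left_module R M" "finite S" "S \<subseteq> carrier M"
  shows "\<zero>\<^bsub>M\<^esub> \<in> lspan R M S"
proof -
  interpret R: ring R using lm_basic[OF assms(1)] by simp
  interpret M: abelian_group M using lm_basic[OF assms(1)] by simp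
  have "finsum M (\<lambda>s. smult M ((\<lambda>_. \<zero>\<^bsub>R\<^esub>) s) s) S = finsum M (\<lambda>s. \<zero>\<^bsub>M\<^esub>) S"
  proof -
    have h: "\<And>s. s \<in> S \<Longrightarrow> smult M \<zero>\<^bsub>R\<^esub> s = \<zero>\<^bsub>M\<^esub>" using assms lm_zero_smult[OF assms(1)] by blast
    show ?thesis by (intro M.finsum_cong) (simp_all add: h)
  qed
  also have "\<dots> = \<zero>\<^bsub>M\<^esub>" by simp
  finally show ?thesis unfolding lspan_def by force
qed

lemma lspan_step:
  assumes "left_module R M" "finite S" "S \<subseteq> carrier M" "x \<in> lspan R M S" "s \<in> S" "a \<in> carrier R"
  shows "smult M a s \<oplus>\<^bsub>M\<^esub> x \<in> lspan R M S"
proof -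
  interpret R: ring R using lm_basic[OF assms(1)] by simp
  interpret M: abelian_group M using lm_basic[OF assms(1)] by simp
  note sm = lm_basic(3)[OF assms(1)]
  obtain c where c: "c \<in> S \<rightarrow> carrier R" "x = finsum M (\<lambda>t. smult M (c t) t) S"
    using assms(4) unfolding lspan_def by blast
  define c' where "c' = c(s := a \<oplus>\<^bsub>R\<^esub> c s)"
  have cs: "c s \<in> carrier R" using funcset_mem[OF c(1) assms(5)] .
  have c'R: "c' \<in> S \<rightarrow> carrier R"
  proof
    fix t assume t: "t \<in> S"
    show "c' t \<in> carrier R"
    proof (cases "t = s")
      case True
      then show ?thesis unfolding c'_def using R.a_closed[OF assms(6) cs] by simp
    next
      case False
      then show ?thesis unfolding c'_def using funcset_mem[OF c(1) t] by simp
    qed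
  qed
  have S: "S = insert s (S - {s})" using assms by blast
  have sM: "s \<in> carrier M" using assms(3,5) by blast
  have P1: "(\<lambda>t. smult M (c t) t) \<in> S - {s} \<rightarrow> carrier M" using c assms sm by auto
  have P2: "(\<lambda>t. smult M (c' t) t) \<in> S - {s} \<rightarrow> carrier M" using c'R assms sm by auto
  have x: "x = smult M (c s) s \<oplus>\<^bsub>M\<^esub> finsum M (\<lambda>t. smult M (c t) t) (S - {s})"
  proof -
    have "x = finsum M (\<lambda>t. smult M (c t) t) (insert s (S - {s}))" using c(2) S by simp
    also have "\<dots> = smult M (c s) s \<oplus>\<^bsub>M\<^esub> finsum M (\<lambda>t. smult M (c t) t) (S - {s})"
      using M.finsum_insert[OF _ _ P1 sm[OF cs sM]] assms(2) by blast
    finally show ?thesis .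
  qed
  have eq: "finsum M (\<lambda>t. smult M (c' t) t) (S - {s}) = finsum M (\<lambda>t. smult M (c t) t) (S - {s})"
    by (rule M.finsum_cong) (use P2 in \<open>simp_all add: c'_def\<close>)
  have "finsum M (\<lambda>t. smult M (c' t) t) S = smult M (c' s) s \<oplus>\<^bsub>M\<^esub> finsum M (\<lambda>t. smult M (c' t) t) (S - {s})"
  proof -
    have "finsum M (\<lambda>t. smult M (c' t) t) S = finsum M (\<lambda>t. smult M (c' t) t) (insert s (S - {s}))" using S by simp
    also have "\<dots> = smult M (c' s) s \<oplus>\<^bsub>M\<^esub> finsum M (\<lambda>t. smult M (c' t) t) (S - {s})"
      using M.finsum_insert[OF _ _ P2 sm[OF funcset_mem[OF c'R assms(5)] sM]] assms(2) by blast
    finally show ?thesis .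
  qed
  also have "\<dots> = (smult M a s \<oplus>\<^bsub>M\<^esub> smult M (c s) s) \<oplus>\<^bsub>M\<^esub> finsum M (\<lambda>t. smult M (c t) t) (S - {s})"
  proof -
    have sM: "s \<in> carrier M" using assms(3,5) by blast
    have "c' s = a \<oplus>\<^bsub>R\<^esub> c s" by (simp add: c'_def)
    moreover have "smult M (a \<oplus>\<^bsub>R\<^esub> c s) s = smult M a s \<oplus>\<^bsub>M\<^esub> smult M (c s) s"
      using lm_basic(4)[OF assms(1) assms(6) cs sM] .
    ultimately show ?thesis by (simp only: eq)
  qed
  also have "\<dots> = smult M a s \<oplus>\<^bsub>M\<^esub> x"
  proof -
    have sM: "s \<in> carrier M" using assms(3,5) by blast
    have 1: "smult M a s \<in> carrier M" using sm[OF assms(6) sM] .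
    have 2: "smult M (c s) s \<in> carrier M" using sm[OF cs sM] .
    have 3: "finsum M (\<lambda>t. smult M (c t) t) (S - {s}) \<in> carrier M" using M.finsum_closed[OF P1] .
    show ?thesis unfolding x using M.a_assoc[OF 1 2 3] .
  qed
  finally have eqn: "finsum M (\<lambda>t. smult M (c' t) t) S = smult M a s \<oplus>\<^bsub>M\<^esub> x" .
  show ?thesis unfolding lspan_def by (rule CollectI, rule exI[of _ c'], rule conjI[OF eqn[symmetric] c'R])
qed

lemma lspan_sub_image:
  assumes "left_module R M" "finite S" "S \<subseteq> A" "A \<subseteq> carrier M" "\<zero>\<^bsub>M\<^esub> \<in> A"
    "\<And>x y. x \<in> A \<Longrightarrow> y \<in> A \<Longrightarrow> x \<oplus>\<^bsub>M\<^esub> y \<in> A"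
    "\<And>a x. a \<in> carrier R \<Longrightarrow> x \<in> A \<Longrightarrow> smult M a x \<in> A"
  shows "lspan R M S \<subseteq> A"
proof
  interpret M: abelian_group M using lm_basic[OF assms(1)] by simp
  note sm = lm_basic(3)[OF assms(1)]
  fix x assume "x \<in> lspan R M S"
  then obtain c where c: "c \<in> S \<rightarrow> carrier R" "x = finsum M (\<lambda>t. smult M (c t) t) S"
    unfolding lspan_def by blast
  have "finsum M (\<lambda>t. smult M (c t) t) T \<in> A" if "finite T" "T \<subseteq> S" for T
    using that
    proof (induction T rule: finite_induct)
      case empty then show ?case using assms(5) by simp
    next
      case (insert t T)
      have tS: "t \<in> S" using insert.prems by blast
      have ct: "c t \<in> carrier R" using funcset_mem[OF c(1) tS] .
      have tA: "t \<in> A" using tS assms(3) by blast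
      have TS: "T \<subseteq> S" using insert.prems by blast
      have tM: "t \<in> carrier M" using tA assms(4) by auto
      have "(\<lambda>t. smult M (c t) t) \<in> T \<rightarrow> carrier M"
      proof
        fix u assume "u \<in> T"
        then have "u \<in> S" using TS by blast
        then have "c u \<in> carrier R" "u \<in> carrier M" using funcset_mem[OF c(1)] assms(3,4) by blast+
        then show "smult M (c u) u \<in> carrier M" by (rule sm)
      qed
      moreover have "smult M (c t) t \<in> carrier M" using ct tM by (rule sm)
      ultimately have "finsum M (\<lambda>t. smult M (c t) t) (insert t T) = smult M (c t) t \<oplus>\<^bsub>M\<^esub> finsum M (\<lambda>t. smult M (c t) t) T"
        by (rule M.finsum_insert[OF insert.hyps(1,2)])
      moreover have "smult M (c t) t \<oplus>\<^bsub>M\<^esub> finsum M (\<lambda>t. smult M (c t) t) T \<in> A"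
        using assms(6)[OF assms(7)[OF ct tA] insert.IH[OF TS]] .
      ultimately show ?case by simp
    qed
  from this[OF assms(2) subset_refl] show "x \<in> A" unfolding c(2) .
qed

lemma dual_simps:
  "carrier (dual_module R Q) = {f. f \<in> carrier Q \<rightarrow>\<^sub>E carrier R \<and>
                   (\<forall>x\<in>carrier Q. \<forall>y\<in>carrier Q. f (x \<oplus>\<^bsub>Q\<^esub> y) = f x \<oplus>\<^bsub>R\<^esub> f y) \<and>
                   (\<forall>a\<in>carrier R. \<forall>x\<in>carrier Q. f (smult Q a x) = f x \<otimes>\<^bsub>R\<^esub> a)}"
  "zero (dual_module R Q) = (\<lambda>x\<in>carrier Q. \<zero>\<^bsub>R\<^esub>)"
  "add (dual_module R Q) = (\<lambda>f g. \<lambda>x\<in>carrier Q. f x \<oplus>\<^bsub>R\<^esub> g x)"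
  "smult (dual_module R Q) = (\<lambda>a f. \<lambda>x\<in>carrier Q. a \<otimes>\<^bsub>R\<^esub> f x)"
  by (simp_all add: dual_module_def)

lemma free_simps:
  "carrier (free_right_module R I) = {\<phi>. \<phi> \<in> I \<rightarrow>\<^sub>E carrier R \<and> finite {i\<in>I. \<phi> i \<noteq> \<zero>\<^bsub>R\<^esub>}}"
  "add (free_right_module R I) = (\<lambda>\<phi> \<psi>. \<lambda>i\<in>I. \<phi> i \<oplus>\<^bsub>R\<^esub> \<psi> i)"
  "smult (free_right_module R I) = (\<lambda>a \<phi>. \<lambda>i\<in>I. \<phi> i \<otimes>\<^bsub>R\<^esub> a)"
  by (simp_all add: free_right_module_def)

lemma rm_basic:
  assumes "right_module R M"
  shows "ring R" "abelian_group M"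
    "\<And>a x. a \<in> carrier R \<Longrightarrow> x \<in> carrier M \<Longrightarrow> smult M a x \<in> carrier M"
  using assms unfolding right_module_def by auto

lemma dual_memI:
  assumes "f \<in> carrier Q \<rightarrow>\<^sub>E carrier R"
    "\<And>x y. x \<in> carrier Q \<Longrightarrow> y \<in> carrier Q \<Longrightarrow> f (x \<oplus>\<^bsub>Q\<^esub> y) = f x \<oplus>\<^bsub>R\<^esub> f y"
    "\<And>a x. a \<in> carrier R \<Longrightarrow> x \<in> carrier Q \<Longrightarrow> f (smult Q a x) = f x \<otimes>\<^bsub>R\<^esub> a"
  shows "f \<in> carrier (dual_module R Q)"
  using assms by (simp add: dual_simps)

lemma dual_memD:
  assumes "f \<in> carrier (dual_module R Q)"
  shows "f \<in> carrier Q \<rightarrow>\<^sub>E carrier R"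
    "\<And>x. x \<in> carrier Q \<Longrightarrow> f x \<in> carrier R"
    "\<And>x y. x \<in> carrier Q \<Longrightarrow> y \<in> carrier Q \<Longrightarrow> f (x \<oplus>\<^bsub>Q\<^esub> y) = f x \<oplus>\<^bsub>R\<^esub> f y"
    "\<And>a x. a \<in> carrier R \<Longrightarrow> x \<in> carrier Q \<Longrightarrow> f (smult Q a x) = f x \<otimes>\<^bsub>R\<^esub> a"
  using assms by (auto simp: dual_simps)

lemma dual_add_closed:
  assumes "right_module R Q" "\<phi> \<in> carrier (dual_module R Q)" "\<psi> \<in> carrier (dual_module R Q)"
  shows "add (dual_module R Q) \<phi> \<psi> \<in> carrier (dual_module R Q)"
proof -
  interpret R: ring R using rm_basic[OF assms(1)] by simp
  interpret Q: abelian_group Q using rm_basic[OF assms(1)] by simp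
  note sm = rm_basic(3)[OF assms(1)]
  note p = dual_memD[OF assms(2)] and q = dual_memD[OF assms(3)]
  have "(\<lambda>x\<in>carrier Q. \<phi> x \<oplus>\<^bsub>R\<^esub> \<psi> x) \<in> carrier (dual_module R Q)"
  proof (rule dual_memI)
    show "(\<lambda>x\<in>carrier Q. \<phi> x \<oplus>\<^bsub>R\<^esub> \<psi> x) \<in> carrier Q \<rightarrow>\<^sub>E carrier R"
      using p(2) q(2) by auto
    fix x y assume xy: "x \<in> carrier Q" "y \<in> carrier Q"
    show "(\<lambda>x\<in>carrier Q. \<phi> x \<oplus>\<^bsub>R\<^esub> \<psi> x) (x \<oplus>\<^bsub>Q\<^esub> y) =
      (\<lambda>x\<in>carrier Q. \<phi> x \<oplus>\<^bsub>R\<^esub> \<psi> x) x \<oplus>\<^bsub>R\<^esub> (\<lambda>x\<in>carrier Q. \<phi> x \<oplus>\<^bsub>R\<^esub> \<psi> x) y"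
      using xy p(2,3) q(2,3) by (simp add: R.a_ac)
  next
    fix a x assume ax: "a \<in> carrier R" "x \<in> carrier Q"
    show "(\<lambda>x\<in>carrier Q. \<phi> x \<oplus>\<^bsub>R\<^esub> \<psi> x) (smult Q a x) = (\<lambda>x\<in>carrier Q. \<phi> x \<oplus>\<^bsub>R\<^esub> \<psi> x) x \<otimes>\<^bsub>R\<^esub> a"
      using ax p(2,4) q(2,4) sm[OF ax] by (simp add: R.l_distr)
  qed
  then show ?thesis by (simp add: dual_simps)
qed

lemma dual_smult_closed:
  assumes "right_module R Q" "a \<in> carrier R" "\<phi> \<in> carrier (dual_module R Q)"
  shows "smult (dual_module R Q) a \<phi> \<in> carrier (dual_module R Q)"
proof -
  interpret R: ring R using rm_basic[OF assms(1)] by simp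
  interpret Q: abelian_group Q using rm_basic[OF assms(1)] by simp
  note sm = rm_basic(3)[OF assms(1)]
  note p = dual_memD[OF assms(3)]
  have "(\<lambda>x\<in>carrier Q. a \<otimes>\<^bsub>R\<^esub> \<phi> x) \<in> carrier (dual_module R Q)"
  proof (rule dual_memI)
    show "(\<lambda>x\<in>carrier Q. a \<otimes>\<^bsub>R\<^esub> \<phi> x) \<in> carrier Q \<rightarrow>\<^sub>E carrier R"
      using p(2) assms(2) by auto
    fix x y assume xy: "x \<in> carrier Q" "y \<in> carrier Q"
    show "(\<lambda>x\<in>carrier Q. a \<otimes>\<^bsub>R\<^esub> \<phi> x) (x \<oplus>\<^bsub>Q\<^esub> y) =
      (\<lambda>x\<in>carrier Q. a \<otimes>\<^bsub>R\<^esub> \<phi> x) x \<oplus>\<^bsub>R\<^esub> (\<lambda>x\<in>carrier Q. a \<otimes>\<^bsub>R\<^esub> \<phi> x) y"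
      using xy p(2,3) assms(2) by (simp add: R.r_distr)
  next
    fix b x assume bx: "b \<in> carrier R" "x \<in> carrier Q"
    show "(\<lambda>x\<in>carrier Q. a \<otimes>\<^bsub>R\<^esub> \<phi> x) (smult Q b x) = (\<lambda>x\<in>carrier Q. a \<otimes>\<^bsub>R\<^esub> \<phi> x) x \<otimes>\<^bsub>R\<^esub> b"
      using bx p(2,4) sm[OF bx] assms(2) by (simp add: R.m_assoc)
  qed
  then show ?thesis by (simp add: dual_simps)
qed

lemma dual_zero_in:
  assumes "right_module R Q"
  shows "(\<lambda>x\<in>carrier Q. \<zero>\<^bsub>R\<^esub>) \<in> carrier (dual_module R Q)"
proof -
  interpret R: ring R using rm_basic[OF assms(1)] by simp
  interpret Q: abelian_group Q using rm_basic[OF assms(1)] by simp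
  note sm = rm_basic(3)[OF assms(1)]
  show ?thesis using sm by (simp add: dual_simps)
qed

lemma topo_nbhd:
  assumes "continuous_map (pointwise_topology R Q) (discrete_topology (carrier P)) f"
    "z \<in> carrier (dual_module R Q)"
  shows "\<exists>F. finite F \<and> F \<subseteq> carrier Q \<and>
     (\<forall>\<phi>\<in>carrier (dual_module R Q). (\<forall>q\<in>F. \<phi> q = z q) \<longrightarrow> f \<phi> = f z)"
proof -
  let ?X = "product_topology (\<lambda>_. discrete_topology (carrier R)) (carrier Q)"
  have top0: "topspace (pointwise_topology R Q) = (\<Pi>\<^sub>E i\<in>carrier Q. carrier R) \<inter> carrier (dual_module R Q)"
    unfolding pointwise_topology_def by simp
  have top: "topspace (pointwise_topology R Q) = carrier (dual_module R Q)"
    unfolding top0 using dual_memD(1) by blast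
  have "f ` topspace (pointwise_topology R Q) \<subseteq> topspace (discrete_topology (carrier P))"
    using continuous_map_image_subset_topspace[OF assms(1)] .
  then have fz: "f z \<in> carrier P" using assms(2) unfolding top topspace_discrete_topology by blast
  have "openin (discrete_topology (carrier P)) {f z}" using fz by simp
  then have "openin (pointwise_topology R Q) {x \<in> topspace (pointwise_topology R Q). f x \<in> {f z}}"
    using openin_continuous_map_preimage[OF assms(1)] by blast
  then have "openin (subtopology ?X (carrier (dual_module R Q))) {x \<in> carrier (dual_module R Q). f x \<in> {f z}}"
    unfolding top by (simp add: pointwise_topology_def)
  then obtain T where T: "openin ?X T" "{x \<in> carrier (dual_module R Q). f x \<in> {f z}} = T \<inter> carrier (dual_module R Q)"
    unfolding openin_subtopology by blast
  have "z \<in> T" using T(2) assms(2) by blast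
  from product_topology_open_contains_basis[OF T(1) this] obtain X where
    X: "z \<in> (\<Pi>\<^sub>E i\<in>carrier Q. X i)" "finite {i. X i \<noteq> topspace (discrete_topology (carrier R))}"
      "(\<Pi>\<^sub>E i\<in>carrier Q. X i) \<subseteq> T" by blast
  define F where "F = {i. X i \<noteq> carrier R} \<inter> carrier Q"
  have "F \<subseteq> {i. X i \<noteq> topspace (discrete_topology (carrier R))}" unfolding F_def by auto
  then have "finite F" using X(2) finite_subset by blast
  moreover have "F \<subseteq> carrier Q" unfolding F_def by blast
  moreover have "f \<phi> = f z" if "\<phi> \<in> carrier (dual_module R Q)" "\<forall>q\<in>F. \<phi> q = z q" for \<phi>
  proof -
    have "\<phi> \<in> (\<Pi>\<^sub>E i\<in>carrier Q. X i)"
    proof -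
      have "\<phi> \<in> carrier Q \<rightarrow>\<^sub>E carrier R" using that(1) by (simp add: dual_simps)
      moreover have "\<phi> i \<in> X i" if i: "i \<in> carrier Q" for i
      proof (cases "X i = carrier R")
        case True
        then show ?thesis using i \<open>\<phi> \<in> carrier Q \<rightarrow>\<^sub>E carrier R\<close> by auto
      next
        case False
        then have "i \<in> F" using i unfolding F_def by blast
        then have "\<phi> i = z i" using \<open>\<forall>q\<in>F. \<phi> q = z q\<close> by blast
        then show ?thesis using X(1) i by auto
      qed
      ultimately show ?thesis by (auto simp: PiE_iff)
    qed
    then have "\<phi> \<in> T" using X(3) by blast
    then show ?thesis using T(2) that(1) by blast
  qed
  ultimately show ?thesis by blast
qed

lemma lin_mapD:
  assumes "lin_map R M N f"
  shows "\<And>x. x \<in> carrier M \<Longrightarrow> f x \<in> carrier N"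
    "\<And>x y. x \<in> carrier M \<Longrightarrow> y \<in> carrier M \<Longrightarrow> f (x \<oplus>\<^bsub>M\<^esub> y) = f x \<oplus>\<^bsub>N\<^esub> f y"
    "\<And>a x. a \<in> carrier R \<Longrightarrow> x \<in> carrier M \<Longrightarrow> f (smult M a x) = smult N a (f x)"
  using assms unfolding lin_map_def by auto

definition ebasis :: "('r, 'c) ring_scheme \<Rightarrow> 'i set \<Rightarrow> 'i \<Rightarrow> 'i \<Rightarrow> 'r" where
  "ebasis R J j = (\<lambda>k\<in>J. if k = j then \<one>\<^bsub>R\<^esub> else \<zero>\<^bsub>R\<^esub>)"

lemma free_memI:
  assumes "v \<in> J \<rightarrow>\<^sub>E carrier R" "finite {i\<in>J. v i \<noteq> \<zero>\<^bsub>R\<^esub>}"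
  shows "v \<in> carrier (free_right_module R J)"
  using assms by (simp add: free_simps)

lemma free_memD:
  assumes "v \<in> carrier (free_right_module R J)"
  shows "v \<in> J \<rightarrow>\<^sub>E carrier R" "finite {i\<in>J. v i \<noteq> \<zero>\<^bsub>R\<^esub>}"
  using assms by (simp_all add: free_simps)

lemma ebasis_mem:
  assumes "ring R" "j \<in> J"
  shows "ebasis R J j \<in> carrier (free_right_module R J)"
proof (rule free_memI)
  interpret R: ring R by fact
  show "ebasis R J j \<in> J \<rightarrow>\<^sub>E carrier R" unfolding ebasis_def by auto
  have "{i\<in>J. ebasis R J j i \<noteq> \<zero>\<^bsub>R\<^esub>} \<subseteq> {j}" unfolding ebasis_def by auto
  then show "finite {i\<in>J. ebasis R J j i \<noteq> \<zero>\<^bsub>R\<^esub>}" by (rule finite_subset) simp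
qed

lemma supp_expand:
  assumes "ring R" "right_module R Q" "lin_map R (free_right_module R J) Q p"
    "\<phi> \<in> carrier (dual_module R Q)" "finite K" "K \<subseteq> J"
  shows "v \<in> carrier (free_right_module R J) \<Longrightarrow> (\<forall>j\<in>J-K. v j = \<zero>\<^bsub>R\<^esub>) \<Longrightarrow>
     \<phi> (p v) = finsum R (\<lambda>j. \<phi> (p (ebasis R J j)) \<otimes>\<^bsub>R\<^esub> v j) K"
proof -
  interpret R: ring R by fact
  interpret Q: abelian_group Q using rm_basic(2)[OF assms(2)] .
  note pD = lin_mapD[OF assms(3)]
  note phD = dual_memD[OF assms(4)]
  have cl: "\<phi> (p (ebasis R J j)) \<in> carrier R" if "j \<in> J" for j
    using phD(2)[OF pD(1)[OF ebasis_mem[OF assms(1) that]]] .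
  show "v \<in> carrier (free_right_module R J) \<Longrightarrow> (\<forall>j\<in>J-K. v j = \<zero>\<^bsub>R\<^esub>) \<Longrightarrow>
     \<phi> (p v) = finsum R (\<lambda>j. \<phi> (p (ebasis R J j)) \<otimes>\<^bsub>R\<^esub> v j) K"
  using assms(5,6)
proof (induction K arbitrary: v rule: finite_induct)
  case empty
  have vP: "v \<in> J \<rightarrow>\<^sub>E carrier R" using free_memD(1)[OF empty.prems(1)] .
  have v0: "v = (\<lambda>j\<in>J. \<zero>\<^bsub>R\<^esub>)"
  proof (rule ext)
    fix j show "v j = (\<lambda>j\<in>J. \<zero>\<^bsub>R\<^esub>) j"
    proof (cases "j \<in> J")
      case True
      then show ?thesis using empty.prems(2) by simp
    next
      case False
      then show ?thesis using PiE_arb[OF vP False] by simp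
    qed
  qed
  have sv: "smult (free_right_module R J) \<zero>\<^bsub>R\<^esub> v = v"
    unfolding free_simps v0 by (rule restrict_ext) simp
  have "p v = p (smult (free_right_module R J) \<zero>\<^bsub>R\<^esub> v)" unfolding sv ..
  also have "\<dots> = smult Q \<zero>\<^bsub>R\<^esub> (p v)" using pD(3)[OF R.zero_closed empty.prems(1)] .
  finally have pv: "p v = smult Q \<zero>\<^bsub>R\<^esub> (p v)" .
  have "\<phi> (p v) = \<phi> (smult Q \<zero>\<^bsub>R\<^esub> (p v))" using pv by (rule arg_cong)
  also have "\<dots> = \<phi> (p v) \<otimes>\<^bsub>R\<^esub> \<zero>\<^bsub>R\<^esub>"
    using phD(4)[OF R.zero_closed pD(1)[OF empty.prems(1)]] .
  also have "\<dots> = \<zero>\<^bsub>R\<^esub>" using phD(2)[OF pD(1)[OF empty.prems(1)]] by simp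
  finally show ?case by simp
next
  case (insert k K)
  have kJ: "k \<in> J" and KJ: "K \<subseteq> J" using insert.prems(3) by auto
  note vmem = insert.prems(1)
  have vP: "v \<in> J \<rightarrow>\<^sub>E carrier R" and vfin: "finite {i\<in>J. v i \<noteq> \<zero>\<^bsub>R\<^esub>}" using free_memD[OF vmem] by auto
  define a where "a = v k"
  have aR: "a \<in> carrier R" unfolding a_def using vP kJ by auto
  define ek where "ek = ebasis R J k"
  have ekm: "ek \<in> carrier (free_right_module R J)" unfolding ek_def using ebasis_mem[OF assms(1) kJ] .
  define ea where "ea = smult (free_right_module R J) a ek"
  have ea_eq: "ea = (\<lambda>j\<in>J. if j = k then a else \<zero>\<^bsub>R\<^esub>)"
    unfolding ea_def ek_def free_simps ebasis_def using aR by (intro restrict_ext) simp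
  have eam: "ea \<in> carrier (free_right_module R J)"
  proof (rule free_memI)
    show "ea \<in> J \<rightarrow>\<^sub>E carrier R" unfolding ea_eq using aR by auto
    have "{i\<in>J. ea i \<noteq> \<zero>\<^bsub>R\<^esub>} \<subseteq> {k}" unfolding ea_eq by auto
    then show "finite {i\<in>J. ea i \<noteq> \<zero>\<^bsub>R\<^esub>}" by (rule finite_subset) simp
  qed
  define v' where "v' = (\<lambda>j\<in>J. if j = k then \<zero>\<^bsub>R\<^esub> else v j)"
  have v'm: "v' \<in> carrier (free_right_module R J)"
  proof (rule free_memI)
    show "v' \<in> J \<rightarrow>\<^sub>E carrier R" unfolding v'_def using vP by auto
    have "{i\<in>J. v' i \<noteq> \<zero>\<^bsub>R\<^esub>} \<subseteq> {i\<in>J. v i \<noteq> \<zero>\<^bsub>R\<^esub>}" unfolding v'_def by auto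
    then show "finite {i\<in>J. v' i \<noteq> \<zero>\<^bsub>R\<^esub>}" using vfin by (rule finite_subset)
  qed
  have vsplit: "v = add (free_right_module R J) ea v'"
  proof (rule ext)
    fix j show "v j = add (free_right_module R J) ea v' j"
    proof (cases "j \<in> J")
      case True
      have vj: "v j \<in> carrier R" "v k \<in> carrier R" using PiE_mem[OF vP True] PiE_mem[OF vP kJ] by auto
      have e1: "add (free_right_module R J) ea v' j = ea j \<oplus>\<^bsub>R\<^esub> v' j" unfolding free_simps using True by simp
      show ?thesis
      proof (cases "j = k")
        case jk: True
        have "ea j = v k" "v' j = \<zero>\<^bsub>R\<^esub>" unfolding ea_eq v'_def a_def using True jk by simp_all
        then show ?thesis unfolding e1 using jk R.r_zero[OF vj(2)] by simp
      next
        case jk: False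
        have "ea j = \<zero>\<^bsub>R\<^esub>" "v' j = v j" unfolding ea_eq v'_def using True jk by simp_all
        then show ?thesis unfolding e1 using R.l_zero[OF vj(1)] by simp
      qed
    next
      case False
      have "add (free_right_module R J) ea v' j = undefined" unfolding free_simps using False by simp
      then show ?thesis using PiE_arb[OF vP False] by simp
    qed
  qed
  have v'0: "\<forall>j\<in>J-K. v' j = \<zero>\<^bsub>R\<^esub>" using insert.prems(2) unfolding v'_def by auto
  have IH: "\<phi> (p v') = finsum R (\<lambda>j. \<phi> (p (ebasis R J j)) \<otimes>\<^bsub>R\<^esub> v' j) K"
    using insert.IH[OF v'm v'0 KJ] .
  have funcs: "(\<lambda>j. \<phi> (p (ebasis R J j)) \<otimes>\<^bsub>R\<^esub> v j) \<in> K \<rightarrow> carrier R"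
  proof (rule Pi_I)
    fix j assume "j \<in> K"
    then have jJ: "j \<in> J" using KJ by blast
    show "\<phi> (p (ebasis R J j)) \<otimes>\<^bsub>R\<^esub> v j \<in> carrier R"
      using R.m_closed[OF cl[OF jJ] PiE_mem[OF vP jJ]] .
  qed
  have pt: "v' j = v j" if "j \<in> K" for j
  proof -
    have "j \<in> J" "j \<noteq> k" using that KJ insert.hyps(2) by auto
    then show ?thesis unfolding v'_def by simp
  qed
  have IH'': "finsum R (\<lambda>j. \<phi> (p (ebasis R J j)) \<otimes>\<^bsub>R\<^esub> v j) K = finsum R (\<lambda>j. \<phi> (p (ebasis R J j)) \<otimes>\<^bsub>R\<^esub> v' j) K"
    by (rule R.finsum_cong) (simp_all add: funcs pt)
  note IH' = IH''[symmetric]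
  have pv: "p v = p ea \<oplus>\<^bsub>Q\<^esub> p v'"
    using trans[OF arg_cong[of _ _ p, OF vsplit] pD(2)[OF eam v'm]] .
  have pea: "p ea = smult Q a (p ek)" unfolding ea_def using pD(3)[OF aR ekm] .
  have phea: "\<phi> (p ea) = \<phi> (p ek) \<otimes>\<^bsub>R\<^esub> a" unfolding pea using phD(4)[OF aR pD(1)[OF ekm]] .
  have "\<phi> (p v) = \<phi> (p ea) \<oplus>\<^bsub>R\<^esub> \<phi> (p v')"
    unfolding pv using phD(3)[OF pD(1)[OF eam] pD(1)[OF v'm]] .
  also have "\<dots> = \<phi> (p ek) \<otimes>\<^bsub>R\<^esub> a \<oplus>\<^bsub>R\<^esub> finsum R (\<lambda>j. \<phi> (p (ebasis R J j)) \<otimes>\<^bsub>R\<^esub> v j) K"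
    unfolding phea IH IH' ..
  also have "\<dots> = finsum R (\<lambda>j. \<phi> (p (ebasis R J j)) \<otimes>\<^bsub>R\<^esub> v j) (insert k K)"
  proof -
    note funcs
    moreover have "\<phi> (p (ebasis R J k)) \<otimes>\<^bsub>R\<^esub> v k \<in> carrier R" using R.m_closed[OF cl[OF kJ] PiE_mem[OF vP kJ]] .
    ultimately show ?thesis using R.finsum_insert[OF insert.hyps(1,2)] unfolding ek_def a_def by simp
  qed
  finally show ?case .
qed
qed

theorem lemma3p1:
  fixes R :: "('r, 'c) ring_scheme" and P :: "('r, 'p) module" and Q :: "('r, 'q) module"
    and f :: "('q \<Rightarrow> 'r) \<Rightarrow> 'p"
  assumes "ring R"
    and "projective_left R P"
    and "projective_right R Q"
    and "lin_map R (dual_module R Q) P f"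
    and "continuous_map (pointwise_topology R Q) (discrete_topology (carrier P)) f"
  shows "finitely_generated_image R P (f ` carrier (dual_module R Q))"
proof -
  interpret R: ring R by fact
  have lmP: "left_module R P" using assms(2) unfolding projective_left_def by blast
  have rmQ: "right_module R Q" using assms(3) unfolding projective_right_def by blast
  obtain J :: "'q set" and i p where
    i: "lin_map R Q (free_right_module R J) i" and
    p: "lin_map R (free_right_module R J) Q p" and
    pi: "\<forall>x\<in>carrier Q. p (i x) = x"
    using assms(3) unfolding projective_right_def by blast
  interpret P: abelian_group P using lm_basic(2)[OF lmP] .
  interpret Q: abelian_group Q using rm_basic(2)[OF rmQ] .
  note fD = lin_mapD[OF assms(4)]
  note iD = lin_mapD[OF i]
  note pD = lin_mapD[OF p]
  let ?D = "dual_module R Q"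
  define z where "z = (\<lambda>x\<in>carrier Q. \<zero>\<^bsub>R\<^esub>)"
  have zD: "z \<in> carrier ?D" unfolding z_def using dual_zero_in[OF rmQ] .
  have "smult ?D \<zero>\<^bsub>R\<^esub> z = z" unfolding dual_simps z_def by (rule restrict_ext) simp
  then have "f z = smult P \<zero>\<^bsub>R\<^esub> (f z)" using fD(3)[OF R.zero_closed zD] by simp
  also have "\<dots> = \<zero>\<^bsub>P\<^esub>" using lm_zero_smult[OF lmP fD(1)[OF zD]] .
  finally have fz: "f z = \<zero>\<^bsub>P\<^esub>" .
  obtain F where F: "finite F" "F \<subseteq> carrier Q"
    "\<And>\<phi>. \<phi> \<in> carrier ?D \<Longrightarrow> (\<forall>q\<in>F. \<phi> q = z q) \<Longrightarrow> f \<phi> = f z"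
    using topo_nbhd[OF assms(5) zD] by blast
  define \<theta> where "\<theta> j = (\<lambda>q\<in>carrier Q. i q j)" for j
  have imem: "i q \<in> J \<rightarrow>\<^sub>E carrier R" "finite {j\<in>J. i q j \<noteq> \<zero>\<^bsub>R\<^esub>}" if "q \<in> carrier Q" for q
    using free_memD[OF iD(1)[OF that]] by auto
  have \<theta>D: "\<theta> j \<in> carrier ?D" if jJ: "j \<in> J" for j
  proof (rule dual_memI)
    show "\<theta> j \<in> carrier Q \<rightarrow>\<^sub>E carrier R"
      unfolding \<theta>_def using PiE_mem[OF imem(1) jJ] by auto
    fix x y assume xy: "x \<in> carrier Q" "y \<in> carrier Q"
    have "i (x \<oplus>\<^bsub>Q\<^esub> y) = add (free_right_module R J) (i x) (i y)" using iD(2)[OF xy] .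
    then have "i (x \<oplus>\<^bsub>Q\<^esub> y) j = i x j \<oplus>\<^bsub>R\<^esub> i y j" unfolding free_simps using jJ by simp
    then show "\<theta> j (x \<oplus>\<^bsub>Q\<^esub> y) = \<theta> j x \<oplus>\<^bsub>R\<^esub> \<theta> j y" unfolding \<theta>_def using xy by simp
  next
    fix a x assume ax: "a \<in> carrier R" "x \<in> carrier Q"
    have "i (smult Q a x) = smult (free_right_module R J) a (i x)" using iD(3)[OF ax] .
    then have "i (smult Q a x) j = i x j \<otimes>\<^bsub>R\<^esub> a" unfolding free_simps using jJ by simp
    then show "\<theta> j (smult Q a x) = \<theta> j x \<otimes>\<^bsub>R\<^esub> a" unfolding \<theta>_def using ax rm_basic(3)[OF rmQ ax] by simp
  qed
  define J0 where "J0 = (\<Union>q\<in>F. {j\<in>J. i q j \<noteq> \<zero>\<^bsub>R\<^esub>})"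
  have J0J: "J0 \<subseteq> J" unfolding J0_def by blast
  have finJ0: "finite J0" unfolding J0_def
  proof (rule finite_UN_I)
    show "finite F" by fact
    fix q assume "q \<in> F"
    then show "finite {j\<in>J. i q j \<noteq> \<zero>\<^bsub>R\<^esub>}" using imem(2) F(2) by blast
  qed
  define S where "S = (\<lambda>j. f (\<theta> j)) ` J0"
  have finS: "finite S" unfolding S_def using finJ0 by simp
  have SP: "S \<subseteq> carrier P" unfolding S_def using fD(1) \<theta>D J0J by blast
  have sub1: "f ` carrier ?D \<subseteq> lspan R P S"
  proof
    fix y assume "y \<in> f ` carrier ?D"
    then obtain \<phi> where \<phi>: "\<phi> \<in> carrier ?D" "y = f \<phi>" by blast
    note phD = dual_memD[OF \<phi>(1)]
    define c where "c j = \<phi> (p (ebasis R J j))" for j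
    have cR: "c j \<in> carrier R" if "j \<in> J" for j
      unfolding c_def using phD(2)[OF pD(1)[OF ebasis_mem[OF assms(1) that]]] .
    define \<psi> where "\<psi> K = (\<lambda>q\<in>carrier Q. finsum R (\<lambda>j. c j \<otimes>\<^bsub>R\<^esub> \<theta> j q) K)" for K
    have claim: "\<psi> K \<in> carrier ?D \<and> f (\<psi> K) \<in> lspan R P S" if "finite K" "K \<subseteq> J0" for K
      using that
    proof (induction K rule: finite_induct)
      case empty
      have "\<psi> {} = z" unfolding \<psi>_def z_def by (rule restrict_ext) simp
      then show ?case using zD fz lspan_zero[OF lmP finS SP] by simp
    next
      case (insert k K)
      have kJ: "k \<in> J" using insert.prems J0J by blast
      have KJ: "K \<subseteq> J0" using insert.prems by blast
      note IH = insert.IH[OF KJ]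
      have ckD: "smult ?D (c k) (\<theta> k) \<in> carrier ?D" using dual_smult_closed[OF rmQ cR[OF kJ] \<theta>D[OF kJ]] .
      have eq: "\<psi> (insert k K) = add ?D (smult ?D (c k) (\<theta> k)) (\<psi> K)"
      proof -
        have "finsum R (\<lambda>j. c j \<otimes>\<^bsub>R\<^esub> \<theta> j q) (insert k K) = c k \<otimes>\<^bsub>R\<^esub> \<theta> k q \<oplus>\<^bsub>R\<^esub> finsum R (\<lambda>j. c j \<otimes>\<^bsub>R\<^esub> \<theta> j q) K"
          if q: "q \<in> carrier Q" for q
        proof (rule R.finsum_insert[OF insert.hyps(1,2)])
          show "(\<lambda>j. c j \<otimes>\<^bsub>R\<^esub> \<theta> j q) \<in> K \<rightarrow> carrier R"
          proof (rule Pi_I)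
            fix j assume "j \<in> K"
            then have jJ: "j \<in> J" using KJ J0J by blast
            show "c j \<otimes>\<^bsub>R\<^esub> \<theta> j q \<in> carrier R"
              using R.m_closed[OF cR[OF jJ] dual_memD(2)[OF \<theta>D[OF jJ] q]] .
          qed
          show "c k \<otimes>\<^bsub>R\<^esub> \<theta> k q \<in> carrier R"
            using R.m_closed[OF cR[OF kJ] dual_memD(2)[OF \<theta>D[OF kJ] q]] .
        qed
        then show ?thesis unfolding \<psi>_def dual_simps by (intro restrict_ext) simp
      qed
      have m1: "\<psi> (insert k K) \<in> carrier ?D"
        unfolding eq using dual_add_closed[OF rmQ ckD conjunct1[OF IH]] .
      have "f (\<psi> (insert k K)) = f (smult ?D (c k) (\<theta> k)) \<oplus>\<^bsub>P\<^esub> f (\<psi> K)"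
        unfolding eq using fD(2)[OF ckD conjunct1[OF IH]] .
      also have "f (smult ?D (c k) (\<theta> k)) = smult P (c k) (f (\<theta> k))"
        using fD(3)[OF cR[OF kJ] \<theta>D[OF kJ]] .
      finally have "f (\<psi> (insert k K)) = smult P (c k) (f (\<theta> k)) \<oplus>\<^bsub>P\<^esub> f (\<psi> K)" .
      moreover have "f (\<theta> k) \<in> S" unfolding S_def using insert.prems by blast
      ultimately have "f (\<psi> (insert k K)) \<in> lspan R P S"
        using lspan_step[OF lmP finS SP conjunct2[OF IH] _ cR[OF kJ]] by simp
      then show ?case using m1 by blast
    qed
    note cl = claim[OF finJ0 subset_refl]
    define d where "d = add ?D \<phi> (smult ?D (\<ominus>\<^bsub>R\<^esub> \<one>\<^bsub>R\<^esub>) (\<psi> J0))"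
    have m1R: "\<ominus>\<^bsub>R\<^esub> \<one>\<^bsub>R\<^esub> \<in> carrier R" by simp
    have mD: "smult ?D (\<ominus>\<^bsub>R\<^esub> \<one>\<^bsub>R\<^esub>) (\<psi> J0) \<in> carrier ?D"
      using dual_smult_closed[OF rmQ m1R conjunct1[OF cl]] .
    have dD: "d \<in> carrier ?D" unfolding d_def using dual_add_closed[OF rmQ \<phi>(1) mD] .
    have agree: "\<psi> J0 q = \<phi> q" if qF: "q \<in> F" for q
    proof -
      have q: "q \<in> carrier Q" using qF F(2) by blast
      have iqm: "i q \<in> carrier (free_right_module R J)" using iD(1)[OF q] .
      have zero: "\<forall>j\<in>J-J0. i q j = \<zero>\<^bsub>R\<^esub>" unfolding J0_def using qF by blast
      have "\<phi> q = \<phi> (p (i q))" using pi q by simp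
      also have "\<dots> = finsum R (\<lambda>j. \<phi> (p (ebasis R J j)) \<otimes>\<^bsub>R\<^esub> i q j) J0"
        using supp_expand[OF assms(1) rmQ p \<phi>(1) finJ0 J0J iqm zero] .
      also have "\<dots> = finsum R (\<lambda>j. c j \<otimes>\<^bsub>R\<^esub> \<theta> j q) J0"
        unfolding c_def \<theta>_def using q by simp
      also have "\<dots> = \<psi> J0 q" unfolding \<psi>_def using q by simp
      finally show ?thesis by (rule sym)
    qed
    have dz: "\<forall>q\<in>F. d q = z q"
    proof
      fix q assume qF: "q \<in> F"
      have q: "q \<in> carrier Q" using qF F(2) by blast
      have phq: "\<phi> q \<in> carrier R" using phD(2)[OF q] .
      have "d q = \<phi> q \<oplus>\<^bsub>R\<^esub> (\<ominus>\<^bsub>R\<^esub> \<one>\<^bsub>R\<^esub> \<otimes>\<^bsub>R\<^esub> \<psi> J0 q)"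
        unfolding d_def dual_simps using q by simp
      also have "\<dots> = \<phi> q \<oplus>\<^bsub>R\<^esub> (\<ominus>\<^bsub>R\<^esub> \<one>\<^bsub>R\<^esub> \<otimes>\<^bsub>R\<^esub> \<phi> q)" unfolding agree[OF qF] ..
      also have "\<dots> = \<zero>\<^bsub>R\<^esub>" using phq by (simp add: R.l_minus R.r_neg)
      also have "\<dots> = z q" unfolding z_def using q by simp
      finally show "d q = z q" .
    qed
    have "f d = f z" using F(3)[OF dD dz] .
    then have e0: "f \<phi> \<oplus>\<^bsub>P\<^esub> \<ominus>\<^bsub>P\<^esub> f (\<psi> J0) = \<zero>\<^bsub>P\<^esub>"
      unfolding d_def fz fD(2)[OF \<phi>(1) mD] fD(3)[OF m1R conjunct1[OF cl]]
        lm_neg_smult[OF lmP fD(1)[OF conjunct1[OF cl]]] .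
    have a1: "f \<phi> \<in> carrier P" using fD(1)[OF \<phi>(1)] .
    have a2: "f (\<psi> J0) \<in> carrier P" using fD(1)[OF conjunct1[OF cl]] .
    have "f \<phi> = f \<phi> \<oplus>\<^bsub>P\<^esub> (\<ominus>\<^bsub>P\<^esub> f (\<psi> J0) \<oplus>\<^bsub>P\<^esub> f (\<psi> J0))" using a1 a2 by (simp add: P.l_neg)
    also have "\<dots> = (f \<phi> \<oplus>\<^bsub>P\<^esub> \<ominus>\<^bsub>P\<^esub> f (\<psi> J0)) \<oplus>\<^bsub>P\<^esub> f (\<psi> J0)"
      using a1 a2 by (simp add: P.a_assoc)
    also have "\<dots> = f (\<psi> J0)" unfolding e0 using a2 by simp
    finally have "f \<phi> = f (\<psi> J0)" .
    then show "y \<in> lspan R P S" using \<phi>(2) conjunct2[OF cl] by simp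
  qed
  have sub2: "lspan R P S \<subseteq> f ` carrier ?D"
  proof (rule lspan_sub_image[OF lmP finS])
    show "S \<subseteq> f ` carrier ?D" unfolding S_def using \<theta>D J0J by blast
    show "f ` carrier ?D \<subseteq> carrier P" using fD(1) by blast
    show "\<zero>\<^bsub>P\<^esub> \<in> f ` carrier ?D" using fz zD by force
    fix x y assume "x \<in> f ` carrier ?D" "y \<in> f ` carrier ?D"
    then obtain u w where u: "u \<in> carrier ?D" "x = f u" and w: "w \<in> carrier ?D" "y = f w" by blast
    have "x \<oplus>\<^bsub>P\<^esub> y = f (add ?D u w)" using fD(2)[OF u(1) w(1)] u(2) w(2) by simp
    then show "x \<oplus>\<^bsub>P\<^esub> y \<in> f ` carrier ?D" using dual_add_closed[OF rmQ u(1) w(1)] by blast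
  next
    fix a x assume a: "a \<in> carrier R" and "x \<in> f ` carrier ?D"
    then obtain u where u: "u \<in> carrier ?D" "x = f u" by blast
    have "smult P a x = f (smult ?D a u)" using fD(3)[OF a u(1)] u(2) by simp
    then show "smult P a x \<in> f ` carrier ?D" using dual_smult_closed[OF rmQ a u(1)] by blast
  qed
  show ?thesis unfolding finitely_generated_image_def
    using finS SP sub1 sub2 by blast
qed

end
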